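(* Assume (P.1) and (P.2) hold. Let $N\in\mathbb N$ and let $\Omega\in\mathscr A$ be $N$-admissible with $\mathfrak m(\Omega)\in(0,+\infty)$. Then $\Lambda_N(\Omega)\le h_N(\Omega)$. If moreover (P.4) and (P.7) hold, then $N\,h_1(\Omega)\le\Lambda_N(\Omega)$; in particular $h_1(\Omega)=\lambda_{1,1}(\Omega)$.
   Context: $(X,\mathscr A,\mathfrak m)$ is a non-negative $\sigma$-finite measure space; for $A,B\in\mathscr A$, "$A\subset B$" means $\mathfrak m(A\setminus B)=0$. $P\colon\mathscr A\to[0,+\infty]$ is a proper functional. (P.1): $P(\emptyset)=0$. (P.2): $P(X)=0$. (P.4): if $\chi_{E_k}\to\chi_E$ in $L^1(X,\mathfrak m)$ then $P(E)\le\liminf_k P(E_k)$. (P.7): $P(E)=P(X\setminus E)$ for all $E\in\mathscr A$. An $N$-cluster is a family $\{\mathcal E(i)\}_{i=1}^N\subset\mathscr A$ with $0<\mathfrak m(\mathcal E(i))<+\infty$, $P(\mathcal E(i))<+\infty$, $\mathfrak m(\mathcal E(i)\cap\mathcal E(j))=0$ for $i\ne j$; $\Omega$ is $N$-admissible if it contains an $N$-cluster; $h_N(\Omega)=\inf\{\sum_{i=1}^N P(\mathcal E(i))/\mathfrak m(\mathcal E(i))\}$ over $N$-clusters in $\Omega$. For $\mathfrak m$-measurable $u$, $\mathrm{Var}(u):=\int_{\mathbb R}P(\{u>t\})\,dt$ if $t\mapsto P(\{u>t\})$ is $\mathscr L^1$-measurable, $+\infty$ otherwise; $BV(X,\mathfrak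 m)=\{u\in L^1(X,\mathfrak m):\mathrm{Var}(u)<+\infty\}$; $BV_0(\Omega,\mathfrak m)=\{u\in BV(X,\mathfrak m):\int_{X\setminus\Omega}|u|\,d\mathfrak m=0\}$. Define $\Lambda_N(\Omega)=\inf\sum_{i=1}^N \mathrm{Var}(u_i)/\|u_i\|_1$, the infimum over $N$-tuples $(u_1,\dots,u_N)$ with $u_i\in BV_0(\Omega,\mathfrak m)$, $\|u_i\|_1>0$, and pairwise disjoint supports ($\mathfrak m(\{u_i\neq0\}\cap\{u_j\ne0\})=0$ for $i\ne j$). $\lambda_{1,1}(\Omega):=\Lambda_1(\Omega)=\inf\{\mathrm{Var}(u)/\|u\|_1: u\in BV_0(\Omega,\mathfrak m),\ \|u\|_1>0\}$. *)

theory Defs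
  imports "HOL-Analysis.Analysis"
begin

text \<open>Standing assumptions on the perimeter-like functional P, defined on the sets of M.
  X is space M; inclusion "A \<subset> B" is understood up to null sets.\<close>

definition proper_functional :: "'a measure \<Rightarrow> ('a set \<Rightarrow> ennreal) \<Rightarrow> bool" where
  "proper_functional M P \<longleftrightarrow> (\<exists>E\<in>sets M. P E < \<infinity>)"

definition P1 :: "('a set \<Rightarrow> ennreal) \<Rightarrow> bool" where
  "P1 P \<longleftrightarrow> P {} = 0"

definition P2 :: "'a measure \<Rightarrow> ('a set \<Rightarrow> ennreal) \<Rightarrow> bool" where
  "P2 M P \<longleftrightarrow> P (space M) = 0"

definition P4 :: "'a measure \<Rightarrow> ('a set \<Rightarrow> ennreal) \<Rightarrow> bool" where
  "P4 M P \<longleftrightarrow> (\<forall>E Ek. E \<in> sets M \<longrightarrow> (\<forall>k. Ek k \<in> sets M) \<longrightarrow>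
     (\<lambda>k. \<integral>\<^sup>+ x. ennreal \<bar>indicator (Ek k) x - indicator E x\<bar> \<partial>M) \<longlonglongrightarrow> 0 \<longrightarrow>
     P E \<le> liminf (\<lambda>k. P (Ek k)))"

definition P7 :: "'a measure \<Rightarrow> ('a set \<Rightarrow> ennreal) \<Rightarrow> bool" where
  "P7 M P \<longleftrightarrow> (\<forall>E\<in>sets M. P E = P (space M - E))"

definition cluster_in :: "'a measure \<Rightarrow> ('a set \<Rightarrow> ennreal) \<Rightarrow> nat \<Rightarrow> 'a set \<Rightarrow> (nat \<Rightarrow> 'a set) \<Rightarrow> bool" where
  "cluster_in M P N \<Omega> E \<longleftrightarrow>
     (\<forall>i\<in>{1..N}. E i \<in> sets M \<and> 0 < emeasure M (E i) \<and> emeasure M (E i) < \<infinity>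
        \<and> P (E i) < \<infinity> \<and> emeasure M (E i - \<Omega>) = 0) \<and>
     (\<forall>i\<in>{1..N}. \<forall>j\<in>{1..N}. i \<noteq> j \<longrightarrow> emeasure M (E i \<inter> E j) = 0)"

definition admissible :: "'a measure \<Rightarrow> ('a set \<Rightarrow> ennreal) \<Rightarrow> nat \<Rightarrow> 'a set \<Rightarrow> bool" where
  "admissible M P N \<Omega> \<longleftrightarrow> (\<exists>E. cluster_in M P N \<Omega> E)"

definition cheeger :: "'a measure \<Rightarrow> ('a set \<Rightarrow> ennreal) \<Rightarrow> nat \<Rightarrow> 'a set \<Rightarrow> ennreal" where
  "cheeger M P N \<Omega> = (INF E\<in>{E. cluster_in M P N \<Omega> E}. \<Sum>i\<in>{1..N}. P (E i) / emeasure M (E i))"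

text \<open>Total variation via the coarea formula (Lebesgue measurability in t).\<close>
definition Var :: "'a measure \<Rightarrow> ('a set \<Rightarrow> ennreal) \<Rightarrow> ('a \<Rightarrow> real) \<Rightarrow> ennreal" where
  "Var M P u = (if (\<lambda>t. P {x\<in>space M. u x > t}) \<in> borel_measurable lebesgue
      then \<integral>\<^sup>+ t. P {x\<in>space M. u x > t} \<partial>lebesgue else \<infinity>)"

definition norm1 :: "'a measure \<Rightarrow> ('a \<Rightarrow> real) \<Rightarrow> ennreal" where
  "norm1 M u = (\<integral>\<^sup>+ x. ennreal \<bar>u x\<bar> \<partial>M)"

definition BV :: "'a measure \<Rightarrow> ('a set \<Rightarrow> ennreal) \<Rightarrow> ('a \<Rightarrow> real) set" where
  "BV M P = {u. integrable M u \<and> Var M P u < \<infinity>}"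

definition BV0 :: "'a measure \<Rightarrow> ('a set \<Rightarrow> ennreal) \<Rightarrow> 'a set \<Rightarrow> ('a \<Rightarrow> real) set" where
  "BV0 M P \<Omega> = {u \<in> BV M P. (\<integral>\<^sup>+ x. ennreal \<bar>u x\<bar> * indicator (space M - \<Omega>) x \<partial>M) = 0}"

definition Lambda :: "'a measure \<Rightarrow> ('a set \<Rightarrow> ennreal) \<Rightarrow> nat \<Rightarrow> 'a set \<Rightarrow> ennreal" where
  "Lambda M P N \<Omega> = (INF us\<in>{us :: nat \<Rightarrow> 'a \<Rightarrow> real.
      (\<forall>i\<in>{1..N}. us i \<in> BV0 M P \<Omega> \<and> norm1 M (us i) > 0) \<and>
      (\<forall>i\<in>{1..N}. \<forall>j\<in>{1..N}. i \<noteq> j \<longrightarrow>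
          emeasure M {x\<in>space M. us i x \<noteq> 0 \<and> us j x \<noteq> 0} = 0)}.
      \<Sum>i\<in>{1..N}. Var M P (us i) / norm1 M (us i))"

definition lambda11 :: "'a measure \<Rightarrow> ('a set \<Rightarrow> ennreal) \<Rightarrow> 'a set \<Rightarrow> ennreal" where
  "lambda11 M P \<Omega> = Lambda M P 1 \<Omega>"

end

theory Submission imports Defs begin

definition lev :: "'a measure \<Rightarrow> ('a\<Rightarrow>real) \<Rightarrow> real \<Rightarrow> 'a set" where
  "lev M u t = (if 0 \<le> t then {x\<in>space M. t < u x} else {x\<in>space M. u x \<le> t})"

lemma inner_t:
  "(\<integral>\<^sup>+t. ennreal (if 0\<le>t \<and> t<v \<or> t<0 \<and> v \<le> t then 1 else 0) \<partial>lborel) = ennreal \<bar>v\<bar>"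
proof (cases "0 \<le> v")
  case True
  have "(\<lambda>t. ennreal (if 0\<le>t \<and> t<v \<or> t<0 \<and> v \<le> t then 1 else 0)) = indicator {0..<v}"
    using True by (auto simp: indicator_def fun_eq_iff)
  then show ?thesis using True by simp
next
  case False
  have "(\<lambda>t. ennreal (if 0\<le>t \<and> t<v \<or> t<0 \<and> v \<le> t then 1 else 0)) = indicator {v..<0}"
    using False by (auto simp: indicator_def fun_eq_iff)
  then show ?thesis using False by simp
qed

lemma layer:
  assumes sf: "sigma_finite_measure M" and u[measurable]: "u \<in> borel_measurable M"
  shows "(\<lambda>t. emeasure M (lev M u t)) \<in> borel_measurable lborel"
    and "(\<integral>\<^sup>+t. emeasure M (lev M u t) \<partial>lborel) = (\<integral>\<^sup>+x. ennreal \<bar>u x\<bar> \<partial>M)"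
proof -
  define g where "g t x = ennreal (if 0\<le>t \<and> t<u x \<or> t<0 \<and> u x \<le> t then 1 else 0)" for t x
  have gm: "case_prod g \<in> borel_measurable (lborel \<Otimes>\<^sub>M M)"
    unfolding g_def by measurable
  have e: "emeasure M (lev M u t) = (\<integral>\<^sup>+x. g t x \<partial>M)" for t
  proof -
    have "lev M u t \<in> sets M" unfolding lev_def by auto
    then have "emeasure M (lev M u t) = (\<integral>\<^sup>+x. indicator (lev M u t) x \<partial>M)" by simp
    also have "\<dots> = (\<integral>\<^sup>+x. g t x \<partial>M)"
      by (rule nn_integral_cong) (auto simp: lev_def g_def indicator_def)
    finally show ?thesis .
  qed
  interpret pair_sigma_finite lborel M
    using sf by (simp add: pair_sigma_finite_def lborel.sigma_finite_measure_axioms)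
  show "(\<lambda>t. emeasure M (lev M u t)) \<in> borel_measurable lborel"
    unfolding e using M2.borel_measurable_nn_integral_fst[OF gm] by simp
  have "(\<integral>\<^sup>+t. emeasure M (lev M u t) \<partial>lborel) = (\<integral>\<^sup>+t. \<integral>\<^sup>+x. g t x \<partial>M \<partial>lborel)"
    by (simp add: e)
  also have "\<dots> = (\<integral>\<^sup>+x. \<integral>\<^sup>+t. g t x \<partial>lborel \<partial>M)"
    using Fubini'[OF gm] by simp
  also have "\<dots> = (\<integral>\<^sup>+x. ennreal \<bar>u x\<bar> \<partial>M)"
    unfolding g_def by (simp add: inner_t)
  finally show "(\<integral>\<^sup>+t. emeasure M (lev M u t) \<partial>lborel) = (\<integral>\<^sup>+x. ennreal \<bar>u x\<bar> \<partial>M)" .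
qed

lemma cheeger_bound:
  assumes S: "S \<in> sets M" "emeasure M (S - \<Omega>) = 0" "emeasure M S < \<infinity>"
  shows "cheeger M P 1 \<Omega> * emeasure M S \<le> P S"
proof (cases "emeasure M S = 0 \<or> P S = \<infinity>")
  case True then show ?thesis by (auto simp: top_unique)
next
  case False
  then have cl: "cluster_in M P 1 \<Omega> (\<lambda>i. S)"
    using S by (auto simp: cluster_in_def zero_less_iff_neq_zero top.not_eq_extremum)
  then have "cheeger M P 1 \<Omega> \<le> P S / emeasure M S"
    unfolding cheeger_def by (auto intro!: INF_lower2[OF _ order_refl] simp del: atLeastAtMost_iff)
  then have "cheeger M P 1 \<Omega> * emeasure M S \<le> P S / emeasure M S * emeasure M S"
    by (rule mult_right_mono) simp
  also have "\<dots> = P S"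
    using False S by (simp add: ennreal_divide_times ennreal_times_divide mult_divide_eq_ennreal[of "emeasure M S" "P S"]  mult.commute)
  finally show ?thesis .
qed

lemma var_ge:
  assumes sf: "sigma_finite_measure M" and P7: "P7 M P" and \<Omega>: "\<Omega> \<in> sets M"
    and fin: "emeasure M \<Omega> < \<infinity>" and u: "u \<in> BV0 M P \<Omega>"
  shows "cheeger M P 1 \<Omega> * norm1 M u \<le> Var M P u"
proof (cases "(\<lambda>t. P {x\<in>space M. u x > t}) \<in> borel_measurable lebesgue")
  case False then show ?thesis by (simp add: Var_def)
next
  case True
  define h where "h = cheeger M P 1 \<Omega>"
  have um[measurable]: "u \<in> borel_measurable M" using u by (auto simp: BV0_def BV_def)
  have z: "(\<integral>\<^sup>+ x. ennreal \<bar>u x\<bar> * indicator (space M - \<Omega>) x \<partial>M) = 0"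
    using u by (simp add: BV0_def)
  have "AE x in M. ennreal \<bar>u x\<bar> * indicator (space M - \<Omega>) x = 0"
    using z \<Omega> by (subst (asm) nn_integral_0_iff_AE) auto
  then have "AE x in M. \<not> (u x \<noteq> 0 \<and> x \<notin> \<Omega>)"
    using AE_space by eventually_elim (auto simp: indicator_def)
  then have null: "emeasure M ({x\<in>space M. u x \<noteq> 0} - \<Omega>) = 0"
  proof -
    have "{x\<in>space M. \<not> \<not> (u x \<noteq> 0 \<and> x \<notin> \<Omega>)} = {x\<in>space M. u x \<noteq> 0} - \<Omega>" by blast
    moreover have "{x\<in>space M. u x \<noteq> 0} - \<Omega> \<in> sets M" using \<Omega> by measurable
    ultimately show ?thesis using AE_iff_measurable[of "{x\<in>space M. u x \<noteq> 0} - \<Omega>" M "\<lambda>x. \<not> (u x \<noteq> 0 \<and> x \<notin> \<Omega>)"] \<open>AE x in M. \<not> (u x \<noteq> 0 \<and> x \<notin> \<Omega>)\<close> by simp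
  qed
  have key: "h * emeasure M S \<le> P S" if S: "S \<in> sets M" "S \<subseteq> {x\<in>space M. u x \<noteq> 0}" for S
  proof -
    have "emeasure M (S - \<Omega>) \<le> emeasure M ({x\<in>space M. u x \<noteq> 0} - \<Omega>)"
      using S \<Omega> by (intro emeasure_mono) auto
    then have n: "emeasure M (S - \<Omega>) = 0" using null by simp
    have "emeasure M S \<le> emeasure M (S - \<Omega>) + emeasure M \<Omega>"
    proof -
      have "emeasure M S \<le> emeasure M ((S - \<Omega>) \<union> \<Omega>)"
        using S \<Omega> by (intro emeasure_mono) auto
      also have "\<dots> \<le> emeasure M (S - \<Omega>) + emeasure M \<Omega>"
        using S \<Omega> by (intro emeasure_subadditive) auto
      finally show ?thesis .
    qed
    then have "emeasure M S < \<infinity>" using n fin by (simp add: order_le_less_trans)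
    then show ?thesis unfolding h_def using cheeger_bound[OF S(1) n] by simp
  qed
  have pt: "h * emeasure M (lev M u t) \<le> P {x\<in>space M. u x > t}" for t
  proof (cases "0 \<le> t")
    case True
    have "h * emeasure M (lev M u t) \<le> P (lev M u t)"
      using True by (intro key) (auto simp: lev_def)
    then show ?thesis using True by (simp add: lev_def)
  next
    case False
    have "h * emeasure M (lev M u t) \<le> P (lev M u t)"
      using False by (intro key) (auto simp: lev_def)
    also have "P (lev M u t) = P (space M - lev M u t)"
    proof -
      have "lev M u t \<in> sets M" using False by (simp add: lev_def)
      then show ?thesis using P7 unfolding P7_def by blast
    qed
    also have "space M - lev M u t = {x\<in>space M. u x > t}"
      using False by (auto simp: lev_def)
    finally show ?thesis .
  qed
  have "h * norm1 M u = h * (\<integral>\<^sup>+t. emeasure M (lev M u t) \<partial>lborel)"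
    using layer(2)[OF sf um] by (simp add: norm1_def)
  also have "\<dots> = (\<integral>\<^sup>+t. h * emeasure M (lev M u t) \<partial>lborel)"
    using layer(1)[OF sf um] by (simp add: nn_integral_cmult)
  also have "\<dots> \<le> (\<integral>\<^sup>+t. P {x\<in>space M. u x > t} \<partial>lborel)"
    by (intro nn_integral_mono pt)
  also have "\<dots> = Var M P u"
    using True by (simp add: Var_def nn_integral_completion)
  finally show ?thesis unfolding h_def .
qed

lemma var_ind:
  assumes E: "E \<in> sets M" and p1: "P1 P" and p2: "P2 M P"
  shows "Var M P (indicator E) = P E"
proof -
  have sub: "E \<subseteq> space M" using E sets.sets_into_space by blast
  have f: "(\<lambda>t. P {x\<in>space M. t < (indicator E x :: real)}) = (\<lambda>t. P E * indicator {0..<1::real} t)"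
  proof
    fix t :: real
    show "P {x\<in>space M. t < (indicator E x :: real)} = P E * indicator {0..<1::real} t"
    proof (cases "t < 0")
      case True
      then have "{x\<in>space M. t < (indicator E x :: real)} = space M"
        by (auto simp: indicator_def)
      then show ?thesis using True p2 by (simp add: P2_def)
    next
      case False
      show ?thesis
      proof (cases "t < 1")
        case True
        then have "{x\<in>space M. t < (indicator E x :: real)} = E"
          using False sub by (auto simp: indicator_def)
        then show ?thesis using True False by simp
      next
        case c: False
        have eq: "{x\<in>space M. t < (indicator E x :: real)} = {}"
          using c by (auto simp: indicator_def)
        show ?thesis using c False p1 unfolding eq P1_def by simp
      qed
    qed
  qed
  have m: "(\<lambda>t. P E * indicator {0..<1::real} t) \<in> borel_measurable lebesgue"
    by (intro measurable_completion) measurable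
  have "(\<integral>\<^sup>+t. P E * indicator {0..<1::real} t \<partial>lebesgue) = P E"
    by (simp add: nn_integral_completion nn_integral_cmult_indicator)
  then show ?thesis unfolding Var_def f using m by simp
qed

lemma norm1_ind:
  assumes E: "E \<in> sets M"
  shows "norm1 M (indicator E) = emeasure M E"
proof -
  have "(\<lambda>x. ennreal \<bar>indicator E x :: real\<bar>) = indicator E"
    by (auto simp: indicator_def fun_eq_iff)
  then show ?thesis using E by (simp add: norm1_def)
qed

lemma lam_le_cheeger:
  assumes p1: "P1 P" and p2: "P2 M P" and \<Omega>: "\<Omega> \<in> sets M"
  shows "Lambda M P N \<Omega> \<le> cheeger M P N \<Omega>"
  unfolding cheeger_def
proof (rule INF_greatest)
  fix E assume "E \<in> {E. cluster_in M P N \<Omega> E}"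
  then have cl: "cluster_in M P N \<Omega> E" by simp
  define us where "us = (\<lambda>i. indicator (E i) :: 'a \<Rightarrow> real)"
  have Es: "E i \<in> sets M" if "i \<in> {1..N}" for i using cl that by (simp add: cluster_in_def)
  have inset: "(\<forall>i\<in>{1..N}. us i \<in> BV0 M P \<Omega> \<and> norm1 M (us i) > 0) \<and>
      (\<forall>i\<in>{1..N}. \<forall>j\<in>{1..N}. i \<noteq> j \<longrightarrow>
          emeasure M {x\<in>space M. us i x \<noteq> 0 \<and> us j x \<noteq> 0} = 0)"
  proof (intro conjI ballI impI)
    fix i assume i: "i \<in> {1..N}"
    have c: "0 < emeasure M (E i)" "emeasure M (E i) < \<infinity>" "P (E i) < \<infinity>" "emeasure M (E i - \<Omega>) = 0"
      using cl i by (auto simp: cluster_in_def)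
    have "(\<integral>\<^sup>+ x. ennreal \<bar>us i x\<bar> * indicator (space M - \<Omega>) x \<partial>M) = (\<integral>\<^sup>+ x. indicator (E i - \<Omega>) x \<partial>M)"
      using sets.sets_into_space[OF Es[OF i]]
      by (intro nn_integral_cong) (auto simp: us_def indicator_def)
    also have "\<dots> = 0" using c Es[OF i] \<Omega> by simp
    finally have "(\<integral>\<^sup>+ x. ennreal \<bar>us i x\<bar> * indicator (space M - \<Omega>) x \<partial>M) = 0" .
    then show "us i \<in> BV0 M P \<Omega>"
      using c Es[OF i] p1 p2 by (simp add: BV0_def BV_def us_def var_ind)
    show "norm1 M (us i) > 0" using c Es[OF i] by (simp add: us_def norm1_ind)
  next
    fix i j assume i: "i \<in> {1..N}" and j: "j \<in> {1..N}" and ij: "i \<noteq> j"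
    have "{x\<in>space M. us i x \<noteq> 0 \<and> us j x \<noteq> 0} = E i \<inter> E j"
      using sets.sets_into_space[OF Es[OF i]] by (auto simp: us_def indicator_def)
    then show "emeasure M {x\<in>space M. us i x \<noteq> 0 \<and> us j x \<noteq> 0} = 0"
      using cl i j ij by (simp add: cluster_in_def)
  qed
  have "Lambda M P N \<Omega> \<le> (\<Sum>i\<in>{1..N}. Var M P (us i) / norm1 M (us i))"
    unfolding Lambda_def by (rule INF_lower) (use inset in simp)
  also have "\<dots> = (\<Sum>i\<in>{1..N}. P (E i) / emeasure M (E i))"
    by (intro sum.cong refl) (simp add: us_def var_ind norm1_ind Es p1 p2)
  finally show "Lambda M P N \<Omega> \<le> (\<Sum>i\<in>{1..N}. P (E i) / emeasure M (E i))" .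
qed

lemma cheeger_le_lam:
  assumes sf: "sigma_finite_measure M" and P7: "P7 M P" and \<Omega>: "\<Omega> \<in> sets M"
    and fin: "emeasure M \<Omega> < \<infinity>"
  shows "of_nat N * cheeger M P 1 \<Omega> \<le> Lambda M P N \<Omega>"
  unfolding Lambda_def
proof (rule INF_greatest)
  fix us assume "us \<in> {us :: nat \<Rightarrow> 'a \<Rightarrow> real.
      (\<forall>i\<in>{1..N}. us i \<in> BV0 M P \<Omega> \<and> norm1 M (us i) > 0) \<and>
      (\<forall>i\<in>{1..N}. \<forall>j\<in>{1..N}. i \<noteq> j \<longrightarrow>
          emeasure M {x\<in>space M. us i x \<noteq> 0 \<and> us j x \<noteq> 0} = 0)}"
  then have us: "\<And>i. i \<in> {1..N} \<Longrightarrow> us i \<in> BV0 M P \<Omega> \<and> norm1 M (us i) > 0" by auto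
  have each: "cheeger M P 1 \<Omega> \<le> Var M P (us i) / norm1 M (us i)" if i: "i \<in> {1..N}" for i
  proof -
    have "integrable M (us i)" using us[OF i] by (simp add: BV0_def BV_def)
    then have "norm1 M (us i) < \<infinity>" by (simp add: integrable_iff_bounded norm1_def)
    moreover have "norm1 M (us i) > 0" using us[OF i] by simp
    moreover have "cheeger M P 1 \<Omega> * norm1 M (us i) \<le> Var M P (us i)"
      using var_ge[OF sf P7 \<Omega> fin] us[OF i] by simp
    ultimately show ?thesis
      by (metis divide_right_mono_ennreal mult_divide_eq_ennreal not_less_iff_gr_or_eq top.not_eq_extremum)
  qed
  have "of_nat N * cheeger M P 1 \<Omega> = (\<Sum>i\<in>{1..N}. cheeger M P 1 \<Omega>)" by simp
  also have "\<dots> \<le> (\<Sum>i\<in>{1..N}. Var M P (us i) / norm1 M (us i))"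
    by (intro sum_mono each)
  finally show "of_nat N * cheeger M P 1 \<Omega> \<le> (\<Sum>i\<in>{1..N}. Var M P (us i) / norm1 M (us i))" .
qed

theorem theorem5p4:
  fixes M :: "'a measure" and P :: "'a set \<Rightarrow> ennreal" and N :: nat and \<Omega> :: "'a set"
  assumes "sigma_finite_measure M"
    and "proper_functional M P"
    and "P1 P" and "P2 M P"
    and "N \<ge> 1"
    and "\<Omega> \<in> sets M"
    and "admissible M P N \<Omega>"
    and "0 < emeasure M \<Omega>" and "emeasure M \<Omega> < \<infinity>"
  shows "Lambda M P N \<Omega> \<le> cheeger M P N \<Omega>
    \<and> (P4 M P \<and> P7 M P \<longrightarrow>
         of_nat N * cheeger M P 1 \<Omega> \<le> Lambda M P N \<Omega> \<and> cheeger M P 1 \<Omega> = lambda11 M P \<Omega>)"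
proof (intro conjI impI)
  show "Lambda M P N \<Omega> \<le> cheeger M P N \<Omega>" using lam_le_cheeger assms by blast
next
  assume h: "P4 M P \<and> P7 M P"
  show "of_nat N * cheeger M P 1 \<Omega> \<le> Lambda M P N \<Omega>"
    using cheeger_le_lam assms h by blast
  have a: "of_nat 1 * cheeger M P 1 \<Omega> \<le> Lambda M P 1 \<Omega>"
    using cheeger_le_lam assms h by blast
  have b: "Lambda M P 1 \<Omega> \<le> cheeger M P 1 \<Omega>" using lam_le_cheeger assms by blast
  show "cheeger M P 1 \<Omega> = lambda11 M P \<Omega>"
    using a b by (simp add: lambda11_def)
qed

end
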